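(* Let $B \in M_m\otimes M_n$ be (real) symmetric and define $X = (B + B^\Gamma)/2$. Then \[ \mu_{\min}(B) = \mu_{\min}(X) = \mu^{\mathbb{C}}_{\min}(X) \quad\text{and}\quad \mu_{\max}(B) = \mu_{\max}(X) = \mu^{\mathbb{C}}_{\max}(X). \]
   Context: $M_n$ denotes real $n\times n$ matrices and $M_m\otimes M_n$ is identified with $M_{mn}$ via the Kronecker product. For $A = \sum_j X_j \otimes Y_j \in M_m\otimes M_n$, the partial transpose is $A^\Gamma = \sum_j X_j \otimes Y_j^T$. For $B \in M_m\otimes M_n$, $\mu_{\min}(B) = \min\{(\mathbf{v}\otimes\mathbf{w})^T B(\mathbf{v}\otimes\mathbf{w}) : \mathbf{v}\in\mathbb{R}^m,\mathbf{w}\in\mathbb{R}^n, \|\mathbf{v}\|=\|\mathbf{w}\|=1\}$ and $\mu_{\max}(B)$ is the corresponding maximum; $\mu^{\mathbb{C}}_{\min}(B)$ and $\mu^{\mathbb{C}}_{\max}(B)$ are defined in the same way but with $\mathbf{v}\in\mathbb{C}^m$, $\mathbf{w}\in\mathbb{C}^n$ and $(\mathbf{v}\otimes\mathbf{w})^*B(\mathbf{v}\otimes\mathbf{w})$ in place of the real quadratic form. *)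

theory Defs
  imports "HOL-Analysis.Analysis"
begin

text \<open>M_m (x) M_n is modelled as real matrices indexed by the product type 'm \<times> 'n
  (row (i,k), column (j,l)); this is the Kronecker identification with M_{mn}.\<close>

definition kvec :: "'a::times ^ 'm::finite \<Rightarrow> 'a ^ 'n::finite \<Rightarrow> 'a ^ ('m \<times> 'n)" where
  "kvec v w = (\<chi> p. v $ fst p * w $ snd p)"

text \<open>Partial transpose: for A = sum X_j (x) Y_j, A^Gamma = sum X_j (x) Y_j^T; entrywise
  A^Gamma_{(i,k),(j,l)} = A_{(i,l),(j,k)}.\<close>
definition partial_transpose :: "'a ^ ('m::finite \<times> 'n::finite) ^ ('m \<times> 'n) \<Rightarrow> 'a ^ ('m \<times> 'n) ^ ('m \<times> 'n)" where
  "partial_transpose A = (\<chi> r c. A $ (fst r, snd c) $ (fst c, snd r))"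

definition prod_vals :: "real ^ ('m::finite \<times> 'n::finite) ^ ('m \<times> 'n) \<Rightarrow> real set" where
  "prod_vals B = {kvec v w \<bullet> (B *v kvec v w) | (v :: real ^ 'm) (w :: real ^ 'n).
                    norm v = 1 \<and> norm w = 1}"

definition mu_min :: "real ^ ('m::finite \<times> 'n::finite) ^ ('m \<times> 'n) \<Rightarrow> real" where
  "mu_min B = Inf (prod_vals B)"

definition mu_max :: "real ^ ('m::finite \<times> 'n::finite) ^ ('m \<times> 'n) \<Rightarrow> real" where
  "mu_max B = Sup (prod_vals B)"

text \<open>Complex version: (v (x) w)^* B (v (x) w) for complex unit v, w. For real symmetric B
  this quantity is real; we take its real part.\<close>
definition cquad :: "real ^ ('m::finite \<times> 'n::finite) ^ ('m \<times> 'n) \<Rightarrow> complex ^ ('m \<times> 'n) \<Rightarrow> complex" where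
  "cquad B u = (\<Sum>a\<in>UNIV. \<Sum>b\<in>UNIV. cnj (u $ a) * complex_of_real (B $ a $ b) * u $ b)"

definition prod_vals_C :: "real ^ ('m::finite \<times> 'n::finite) ^ ('m \<times> 'n) \<Rightarrow> real set" where
  "prod_vals_C B = {Re (cquad B (kvec v w)) | (v :: complex ^ 'm) (w :: complex ^ 'n).
                    norm v = 1 \<and> norm w = 1}"

definition mu_min_C :: "real ^ ('m::finite \<times> 'n::finite) ^ ('m \<times> 'n) \<Rightarrow> real" where
  "mu_min_C B = Inf (prod_vals_C B)"

definition mu_max_C :: "real ^ ('m::finite \<times> 'n::finite) ^ ('m \<times> 'n) \<Rightarrow> real" where
  "mu_max_C B = Sup (prod_vals_C B)"

end

theory Submission
  imports Defs
begin

definition Qf :: "real ^ 'k::finite ^ 'k \<Rightarrow> real ^ 'k \<Rightarrow> real" where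
  "Qf M u = (\<Sum>a\<in>UNIV. \<Sum>b\<in>UNIV. M$a$b * u$a * u$b)"

lemma inner_Qf: "u \<bullet> (M *v u) = Qf M u"
  unfolding inner_vec_def matrix_vector_mult_def Qf_def
  by (simp add: sum_distrib_left mult_ac)

lemma swap_sum:
  fixes F :: "('m::finite \<times> 'n::finite) \<Rightarrow> ('m \<times> 'n) \<Rightarrow> real"
  shows "(\<Sum>a\<in>UNIV. \<Sum>b\<in>UNIV. F a b) = (\<Sum>a\<in>UNIV. \<Sum>b\<in>UNIV. F (fst a, snd b) (fst b, snd a))"
proof -
  define s :: "('m \<times> 'n) \<times> ('m \<times> 'n) \<Rightarrow> ('m \<times> 'n) \<times> ('m \<times> 'n)"
    where "s p = ((fst (fst p), snd (snd p)), (fst (snd p), snd (fst p)))" for p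
  have "(\<Sum>a\<in>UNIV. \<Sum>b\<in>UNIV. F a b) = (\<Sum>p\<in>UNIV\<times>UNIV. F (fst p) (snd p))"
    by (simp add: sum.cartesian_product split_def)
  also have "\<dots> = (\<Sum>p\<in>UNIV\<times>UNIV. F (fst (s p)) (snd (s p)))"
    by (rule sum.reindex_bij_witness[where i=s and j=s]) (auto simp: s_def)
  also have "\<dots> = (\<Sum>a\<in>UNIV. \<Sum>b\<in>UNIV. F (fst a, snd b) (fst b, snd a))"
    by (simp add: sum.cartesian_product split_def s_def)
  finally show ?thesis .
qed

lemma Qf_pt: "Qf (partial_transpose B) (kvec v w) = Qf B (kvec v w)"
proof -
  have "Qf B (kvec v w) = (\<Sum>a\<in>UNIV. \<Sum>b\<in>UNIV. B$(fst a, snd b)$(fst b, snd a) * (kvec v w)$(fst a, snd b) * (kvec v w)$(fst b, snd a))"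
    unfolding Qf_def by (rule swap_sum)
  also have "\<dots> = Qf (partial_transpose B) (kvec v w)"
    unfolding Qf_def partial_transpose_def kvec_def by (simp add: mult_ac)
  finally show ?thesis by simp
qed

lemma Qf_lin: "Qf ((1/2) *\<^sub>R (B + C)) u = (1/2) * (Qf B u + Qf C u)"
  unfolding Qf_def by (simp add: sum_distrib_left sum.distrib algebra_simps)

lemma prod_vals_X:
  "prod_vals ((1/2) *\<^sub>R (B + partial_transpose B)) = prod_vals B"
  unfolding prod_vals_def inner_Qf Qf_lin Qf_pt by simp

definition rv :: "complex ^ 'k::finite \<Rightarrow> real ^ 'k" where "rv v = (\<chi> i. Re (v$i))"
definition iv :: "complex ^ 'k::finite \<Rightarrow> real ^ 'k" where "iv v = (\<chi> i. Im (v$i))"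
definition cx :: "real ^ 'k::finite \<Rightarrow> complex ^ 'k" where "cx v = (\<chi> i. complex_of_real (v$i))"

lemma norm_split: "(norm v)^2 = (norm (rv v))^2 + (norm (iv v))^2"
  unfolding dot_square_norm[symmetric] inner_vec_def rv_def iv_def
  by (simp add: inner_complex_def sum.distrib power2_eq_square)

lemma cx_simps: "rv (cx x) = x" "iv (cx x) = 0" "norm (cx x) = norm x"
proof -
  show 1: "rv (cx x) = x" and 2: "iv (cx x) = 0"
    by (simp_all add: rv_def iv_def cx_def vec_eq_iff)
  have "(norm (cx x))^2 = (norm x)^2" using norm_split[of "cx x"] 1 2 by simp
  then show "norm (cx x) = norm x" by (simp add: power2_eq_iff_nonneg)
qed

lemma Re_term: "Re (cnj x * complex_of_real r * y) = r * (Re x * Re y + Im x * Im y)"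
  by (simp add: algebra_simps)

lemma cquad_Re: "Re (cquad M u) = (\<Sum>a\<in>UNIV. \<Sum>b\<in>UNIV. M$a$b * (Re (u$a) * Re (u$b) + Im (u$a) * Im (u$b)))"
  unfolding cquad_def by (simp add: Re_term algebra_simps)

lemma cquad_expand:
  fixes X :: "real ^ ('m::finite \<times> 'n::finite) ^ ('m \<times> 'n)"
  assumes hX: "\<And>i k j l. X$(i,k)$(j,l) = X$(i,l)$(j,k)"
  shows "Re (cquad X (kvec v w)) = Qf X (kvec (rv v) (rv w)) + Qf X (kvec (rv v) (iv w))
          + Qf X (kvec (iv v) (rv w)) + Qf X (kvec (iv v) (iv w))"
proof -
  define A where "A = rv v"
  define Bb where "Bb = iv v"
  define C where "C = rv w"
  define D where "D = iv w"
  define h where "h a b = (A$(fst a) * Bb$(fst b) - Bb$(fst a) * A$(fst b)) *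
       (D$(snd a) * C$(snd b) - C$(snd a) * D$(snd b))" for a b :: "'m \<times> 'n"
  define S where "S = (\<Sum>a\<in>UNIV. \<Sum>b\<in>UNIV. X$a$b * h a b)"
  have "S = (\<Sum>a\<in>UNIV. \<Sum>b\<in>UNIV. X$(fst a, snd b)$(fst b, snd a) * h (fst a, snd b) (fst b, snd a))"
    unfolding S_def by (rule swap_sum)
  also have "\<dots> = (\<Sum>a\<in>UNIV. \<Sum>b\<in>UNIV. - (X$a$b * h a b))"
  proof (intro sum.cong refl)
    fix a b :: "'m \<times> 'n"
    obtain i k where a: "a = (i,k)" by (cases a)
    obtain j l where b: "b = (j,l)" by (cases b)
    show "X$(fst a, snd b)$(fst b, snd a) * h (fst a, snd b) (fst b, snd a) = - (X$a$b * h a b)"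
      unfolding a b h_def using hX[of i l j k] by (simp add: algebra_simps)
  qed
  also have "\<dots> = - S" unfolding S_def by (simp add: sum_negf)
  finally have S0: "S = 0" by simp
  have pt: "X$a$b * (Re ((kvec v w)$a) * Re ((kvec v w)$b) + Im ((kvec v w)$a) * Im ((kvec v w)$b))
     = X$a$b * (kvec A C)$a * (kvec A C)$b + X$a$b * (kvec A D)$a * (kvec A D)$b
       + X$a$b * (kvec Bb C)$a * (kvec Bb C)$b + X$a$b * (kvec Bb D)$a * (kvec Bb D)$b
       + X$a$b * h a b" for a b
    unfolding kvec_def A_def Bb_def C_def D_def rv_def iv_def h_def
    by (simp add: algebra_simps)
  have "Re (cquad X (kvec v w)) = Qf X (kvec A C) + Qf X (kvec A D) + Qf X (kvec Bb C) + Qf X (kvec Bb D) + S"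
    unfolding cquad_Re pt Qf_def S_def by (simp add: sum.distrib)
  then show ?thesis using S0 by (simp add: A_def Bb_def C_def D_def)
qed

lemma Qf_scale: "Qf M (c *\<^sub>R u) = c^2 * Qf M u"
  unfolding Qf_def by (simp add: sum_distrib_left power2_eq_square mult_ac)

lemma kvec_scale: "kvec (s *\<^sub>R x) (t *\<^sub>R y) = (s*t) *\<^sub>R kvec (x::real^'m::finite) (y::real^'n::finite)"
  by (simp add: vec_eq_iff kvec_def)

lemma kvec_zero: "kvec (0::real^'m::finite) (y::real^'n::finite) = 0" "kvec (x::real^'m::finite) (0::real^'n::finite) = 0"
  by (simp_all add: vec_eq_iff kvec_def)

lemma Qf_zero: "Qf M 0 = 0" by (simp add: Qf_def)

lemma Qf_in:
  fixes x :: "real^'m::finite" and y :: "real^'n::finite"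
  assumes "x \<noteq> 0" "y \<noteq> 0"
  shows "Qf M (kvec x y) = ((norm x)^2 * (norm y)^2) * Qf M (kvec ((1/norm x) *\<^sub>R x) ((1/norm y) *\<^sub>R y))"
    "Qf M (kvec ((1/norm x) *\<^sub>R x) ((1/norm y) *\<^sub>R y)) \<in> prod_vals M"
proof -
  have "kvec x y = (norm x * norm y) *\<^sub>R kvec ((1/norm x) *\<^sub>R x) ((1/norm y) *\<^sub>R y)"
    using assms by (simp add: kvec_scale)
  then show "Qf M (kvec x y) = ((norm x)^2 * (norm y)^2) * Qf M (kvec ((1/norm x) *\<^sub>R x) ((1/norm y) *\<^sub>R y))"
    by (simp add: Qf_scale power_mult_distrib)
  show "Qf M (kvec ((1/norm x) *\<^sub>R x) ((1/norm y) *\<^sub>R y)) \<in> prod_vals M"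
    unfolding prod_vals_def inner_Qf using assms
    by (intro CollectI exI[of _ "(1/norm x) *\<^sub>R x"] exI[of _ "(1/norm y) *\<^sub>R y"]) simp
qed

lemma Qf_lower:
  fixes x :: "real^'m::finite" and y :: "real^'n::finite"
  assumes "bdd_below (prod_vals M)"
  shows "Inf (prod_vals M) * ((norm x)^2 * (norm y)^2) \<le> Qf M (kvec x y)"
proof (cases "x = 0 \<or> y = 0")
  case True then show ?thesis by (auto simp: kvec_zero Qf_zero)
next
  case False
  then have "Inf (prod_vals M) \<le> Qf M (kvec ((1/norm x) *\<^sub>R x) ((1/norm y) *\<^sub>R y))"
    using Qf_in(2) assms by (intro cInf_lower) auto
  then show ?thesis using False Qf_in(1)[of x y M]
    by (simp add: mult.commute mult_left_mono)
qed

lemma Qf_upper: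
  fixes x :: "real^'m::finite" and y :: "real^'n::finite"
  assumes "bdd_above (prod_vals M)"
  shows "Qf M (kvec x y) \<le> Sup (prod_vals M) * ((norm x)^2 * (norm y)^2)"
proof (cases "x = 0 \<or> y = 0")
  case True then show ?thesis by (auto simp: kvec_zero Qf_zero)
next
  case False
  then have "Qf M (kvec ((1/norm x) *\<^sub>R x) ((1/norm y) *\<^sub>R y)) \<le> Sup (prod_vals M)"
    using Qf_in(2) assms by (intro cSup_upper) auto
  then show ?thesis using False Qf_in(1)[of x y M]
    by (simp add: mult.commute mult_left_mono)
qed

lemma Qf_bound:
  fixes v :: "real^'m::finite" and w :: "real^'n::finite"
  assumes "norm v = 1" "norm w = 1"
  shows "\<bar>Qf M (kvec v w)\<bar> \<le> (\<Sum>a\<in>UNIV. \<Sum>b\<in>UNIV. \<bar>M$a$b\<bar>)"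
proof -
  have u: "\<bar>(kvec v w)$a\<bar> \<le> 1" for a
  proof -
    have "\<bar>v$(fst a)\<bar> \<le> 1" "\<bar>w$(snd a)\<bar> \<le> 1"
      using component_le_norm_cart[of v] component_le_norm_cart[of w] assms by auto
    then show ?thesis by (simp add: kvec_def abs_mult mult_le_one)
  qed
  have "\<bar>Qf M (kvec v w)\<bar> \<le> (\<Sum>a\<in>UNIV. \<bar>\<Sum>b\<in>UNIV. M$a$b * (kvec v w)$a * (kvec v w)$b\<bar>)"
    unfolding Qf_def by (rule sum_abs)
  also have "\<dots> \<le> (\<Sum>a\<in>UNIV. \<Sum>b\<in>UNIV. \<bar>M$a$b * (kvec v w)$a * (kvec v w)$b\<bar>)"
    by (intro sum_mono sum_abs)
  also have "\<dots> \<le> (\<Sum>a\<in>UNIV. \<Sum>b\<in>UNIV. \<bar>M$a$b\<bar>)"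
  proof (intro sum_mono)
    fix a b
    have "\<bar>(kvec v w)$a * (kvec v w)$b\<bar> \<le> 1" using u[of a] u[of b] by (simp add: abs_mult mult_le_one)
    then have "\<bar>M$a$b\<bar> * \<bar>(kvec v w)$a * (kvec v w)$b\<bar> \<le> \<bar>M$a$b\<bar>"
      by (simp add: mult_left_le)
    then show "\<bar>M$a$b * (kvec v w)$a * (kvec v w)$b\<bar> \<le> \<bar>M$a$b\<bar>"
      by (simp add: abs_mult mult.assoc)
  qed
  finally show ?thesis .
qed

lemma pv_bdd:
  fixes M :: "real ^ ('m::finite \<times> 'n::finite) ^ ('m \<times> 'n)"
  shows "bdd_below (prod_vals M)" "bdd_above (prod_vals M)" "prod_vals M \<noteq> {}"
proof -
  let ?K = "(\<Sum>a\<in>UNIV. \<Sum>b\<in>UNIV. \<bar>M$a$b\<bar>)"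
  have "\<forall>x\<in>prod_vals M. \<bar>x\<bar> \<le> ?K"
    unfolding prod_vals_def inner_Qf using Qf_bound by auto
  then show "bdd_below (prod_vals M)" "bdd_above (prod_vals M)"
    unfolding bdd_below_def bdd_above_def
    by (metis abs_le_iff minus_le_iff)+
  have "Qf M (kvec (axis undefined 1 :: real^'m) (axis undefined 1 :: real^'n)) \<in> prod_vals M"
    unfolding prod_vals_def inner_Qf by force
  then show "prod_vals M \<noteq> {}" by auto
qed

theorem lemma5p1:
  fixes B :: "real ^ ('m::finite \<times> 'n::finite) ^ ('m \<times> 'n)"
  assumes "transpose B = B"
  defines "X \<equiv> (1/2) *\<^sub>R (B + partial_transpose B)"
  shows "mu_min B = mu_min X \<and> mu_min X = mu_min_C X \<and>
         mu_max B = mu_max X \<and> mu_max X = mu_max_C X"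
proof -
  have PX: "prod_vals X = prod_vals B" unfolding X_def by (rule prod_vals_X)
  have hX: "X$(i,k)$(j,l) = X$(i,l)$(j,k)" for i k j l
    unfolding X_def partial_transpose_def by simp
  let ?R = "prod_vals X" and ?C = "prod_vals_C X"
  have bb: "bdd_below ?R" "bdd_above ?R" "?R \<noteq> {}" by (rule pv_bdd)+
  have sub: "?R \<subseteq> ?C"
  proof
    fix x assume "x \<in> ?R"
    then obtain v w where vw: "x = kvec v w \<bullet> (X *v kvec v w)" "norm v = 1" "norm w = 1"
      unfolding prod_vals_def by auto
    have "Re (cquad X (kvec (cx v) (cx w))) = x"
      using cquad_expand[OF hX, of "cx v" "cx w"] vw(1) by (simp add: cx_simps kvec_zero Qf_zero inner_Qf)
    then show "x \<in> ?C" unfolding prod_vals_C_def using vw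
      by (intro CollectI exI[of _ "cx v"] exI[of _ "cx w"]) (simp add: cx_simps)
  qed
  have bnd: "Inf ?R \<le> c \<and> c \<le> Sup ?R" if cC: "c \<in> ?C" for c
  proof -
    obtain v :: "complex^'m" and w :: "complex^'n" where vw: "c = Re (cquad X (kvec v w))" "norm v = 1" "norm w = 1"
      using cC unfolding prod_vals_C_def by blast
    have e: "c = Qf X (kvec (rv v) (rv w)) + Qf X (kvec (rv v) (iv w))
          + Qf X (kvec (iv v) (rv w)) + Qf X (kvec (iv v) (iv w))"
      using cquad_expand[OF hX] vw(1) by simp
    have n: "((norm (rv v))^2 + (norm (iv v))^2) * ((norm (rv w))^2 + (norm (iv w))^2) = 1"
      using norm_split[of v] norm_split[of w] vw by simp
    have "Inf ?R * (((norm (rv v))^2 + (norm (iv v))^2) * ((norm (rv w))^2 + (norm (iv w))^2)) \<le> c"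
      using e Qf_lower[OF bb(1), of "rv v" "rv w"] Qf_lower[OF bb(1), of "rv v" "iv w"]
        Qf_lower[OF bb(1), of "iv v" "rv w"] Qf_lower[OF bb(1), of "iv v" "iv w"]
      by (simp add: algebra_simps)
    moreover have "c \<le> Sup ?R * (((norm (rv v))^2 + (norm (iv v))^2) * ((norm (rv w))^2 + (norm (iv w))^2))"
      using e Qf_upper[OF bb(2), of "rv v" "rv w"] Qf_upper[OF bb(2), of "rv v" "iv w"]
        Qf_upper[OF bb(2), of "iv v" "rv w"] Qf_upper[OF bb(2), of "iv v" "iv w"]
      by (simp add: algebra_simps)
    ultimately show ?thesis using n by simp
  qed
  have Cne: "?C \<noteq> {}" using sub bb(3) by auto
  have Cbb: "bdd_below ?C" "bdd_above ?C" using bnd unfolding bdd_below_def bdd_above_def by blast+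
  have "Inf ?C = Inf ?R"
  proof (rule antisym)
    show "Inf ?C \<le> Inf ?R" using bb(3) sub Cbb(1) by (intro cInf_greatest) (auto intro: cInf_lower)
    show "Inf ?R \<le> Inf ?C" using Cne bnd by (intro cInf_greatest) auto
  qed
  moreover have "Sup ?C = Sup ?R"
  proof (rule antisym)
    show "Sup ?R \<le> Sup ?C" using bb(3) sub Cbb(2) by (intro cSup_least) (auto intro: cSup_upper)
    show "Sup ?C \<le> Sup ?R" using Cne bnd by (intro cSup_least) auto
  qed
  ultimately show ?thesis unfolding mu_min_def mu_max_def mu_min_C_def mu_max_C_def PX by simp
qed

end
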